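(* Let $d\ge2$ and let $Q$ be a qplex. (1) If $s_1,\dots,s_{d^2}\in Q\cap S_{\rm o}$ are the vertices of a regular simplex, then $r(i|j)=s_i(j)$ defines a type-preserving measurement for $Q$, with stretched measurement matrix $R_{ij}=(d+1)s_i(j)-\frac1d$. (2) If $R$ is a $d^2\times d^2$ real orthogonal matrix such that $RQ=\{Rq:q\in Q\}$ is a qplex, then $R$ is the stretched measurement matrix of a type-preserving measurement for $Q$.
   Context: Fix an integer $d\ge 2$. $\langle\cdot,\cdot\rangle$ is the standard inner product on $\mathbb{R}^{d^2}$, $\|\cdot\|$ the Euclidean norm. $\Delta=\{p\in\mathbb{R}^{d^2}: p(i)\ge0,\ \sum_ip(i)=1\}$; $H=\{u\in\mathbb{R}^{d^2}:\sum_i u(i)=1\}$; $c=(1/d^2,\dots,1/d^2)$. For $A\subseteq H$ the polar is $A^*=\{u\in H:\langle u,v\rangle\ge\frac{1}{d(d+1)}\ \forall v\in A\}$. Out-ball $B_{\rm o}=\{u\in H:\|u-c\|\le r_{\rm o}\}$, $r_{\rm o}^2=\frac{d-1}{d^2(d+1)}$, boundary sphere $S_{\rm o}$. A qplex is a set $Q\subseteq\Delta\cap B_{\rm o}$ with $Q^*=Q$. A measurement (with $d^2$ outcomes) is an array of reals $r(i|j)\ge0$, $i,j\in\{1,\dots,d^2\}$, with $\sum_i r(i|j)=1$ for every $j$. For a qplex $Q$ and $q\in Q$, define $q_r(i)=\sum_j\big[(d+1)q(j)-\frac1d\big]r(i|j)$ and $Q_r=\{q_r:q\in Q\}$. The measurement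 is type-preserving for $Q$ if $Q_r$ is a qplex, and $Q$-preserving if $Q_r=Q$. Its stretched measurement matrix is $R_{ij}=(d+1)r(i|j)-\frac1d\sum_k r(i|k)$, so that $q_r=Rq$. Points $s_1,\dots,s_{d^2}$ are vertices of a regular simplex if they are distinct and all pairwise distances are equal. *)

theory Defs
  imports "HOL-Analysis.Analysis"
begin

text \<open>Vectors in R^(d^2) are modelled as real^'n with CARD('n) = d^2.
  Coordinates are indexed by the finite type 'n.\<close>

definition prob_simplex :: "(real^'n) set" where
  "prob_simplex = {p. (\<forall>i. p$i \<ge> 0) \<and> (\<Sum>i\<in>UNIV. p$i) = 1}"

definition hyperplane_H :: "(real^'n) set" where
  "hyperplane_H = {u. (\<Sum>i\<in>UNIV. u$i) = 1}"

definition centre :: "nat \<Rightarrow> real^'n" where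
  "centre d = (\<chi> i. 1 / (real d)^2)"

definition polar :: "nat \<Rightarrow> (real^'n) set \<Rightarrow> (real^'n) set" where
  "polar d A = {u \<in> hyperplane_H. \<forall>v\<in>A. inner u v \<ge> 1 / (real d * (real d + 1))}"

definition out_radius :: "nat \<Rightarrow> real" where
  "out_radius d = sqrt ((real d - 1) / ((real d)^2 * (real d + 1)))"

definition out_ball :: "nat \<Rightarrow> (real^'n) set" where
  "out_ball d = {u \<in> hyperplane_H. norm (u - centre d) \<le> out_radius d}"

definition out_sphere :: "nat \<Rightarrow> (real^'n) set" where
  "out_sphere d = {u \<in> hyperplane_H. norm (u - centre d) = out_radius d}"

definition qplex :: "nat \<Rightarrow> (real^'n) set \<Rightarrow> bool" where
  "qplex d Q \<longleftrightarrow> Q \<subseteq> prob_simplex \<inter> out_ball d \<and> polar d Q = Q"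

text \<open>A measurement: r i j = r(i|j).\<close>
definition measurement :: "('n \<Rightarrow> 'n \<Rightarrow> real) \<Rightarrow> bool" where
  "measurement r \<longleftrightarrow> (\<forall>i j. r i j \<ge> 0) \<and> (\<forall>j. (\<Sum>i\<in>UNIV. r i j) = 1)"

definition meas_apply :: "nat \<Rightarrow> ('n \<Rightarrow> 'n \<Rightarrow> real) \<Rightarrow> real^'n \<Rightarrow> real^'n" where
  "meas_apply d r q = (\<chi> i. \<Sum>j\<in>UNIV. ((real d + 1) * q$j - 1 / real d) * r i j)"

definition type_preserving :: "nat \<Rightarrow> (real^'n) set \<Rightarrow> ('n \<Rightarrow> 'n \<Rightarrow> real) \<Rightarrow> bool" where
  "type_preserving d Q r \<longleftrightarrow> measurement r \<and> qplex d (meas_apply d r ` Q)"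

definition stretched_matrix :: "nat \<Rightarrow> ('n \<Rightarrow> 'n \<Rightarrow> real) \<Rightarrow> real^'n^'n" where
  "stretched_matrix d r = (\<chi> i j. (real d + 1) * r i j - (1 / real d) * (\<Sum>k\<in>UNIV. r i k))"

definition regular_simplex_vertices :: "('n \<Rightarrow> real^'n) \<Rightarrow> bool" where
  "regular_simplex_vertices s \<longleftrightarrow> inj s \<and>
     (\<exists>\<delta>. \<forall>i j. i \<noteq> j \<longrightarrow> dist (s i) (s j) = \<delta>)"

end

theory Submission
  imports Defs
begin

lemma sum_inner_one: "(\<Sum>i\<in>UNIV. (u::real^'n)$i) = u \<bullet> vec 1"
  by (simp add: inner_vec_def)

lemma inner_mv_transpose: "((A::real^'n^'n) *v x) \<bullet> y = x \<bullet> (transpose A *v y)"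
  by (metis dot_lmul_matrix inner_commute transpose_matrix_vector)

lemma orth_inner: assumes "orthogonal_matrix (R::real^'n^'n)"
  shows "(R *v x) \<bullet> (R *v y) = x \<bullet> y"
proof -
  have "(R *v x) \<bullet> (R *v y) = x \<bullet> (transpose R *v (R *v y))" by (rule inner_mv_transpose)
  also have "\<dots> = x \<bullet> y" using assms
    by (simp add: matrix_vector_mul_assoc orthogonal_matrix_def del: transpose_matrix_vector)
  finally show ?thesis .
qed

lemma orth_norm: assumes "orthogonal_matrix (R::real^'n^'n)"
  shows "norm (R *v x) = norm x"
  using orth_inner[OF assms] by (simp add: norm_eq_sqrt_inner)

lemma singular_left: assumes "(M::real^'n^'n) *v x = 0" "x \<noteq> 0"
  shows "\<exists>y. y \<noteq> 0 \<and> y v* M = 0"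
proof (rule ccontr)
  assume "\<not> ?thesis"
  hence "\<forall>y. transpose M *v y = 0 \<longrightarrow> y = 0" by auto
  then obtain B where "B ** transpose M = mat 1" using matrix_left_invertible_ker by blast
  hence "transpose M ** B = mat 1" using matrix_left_right_inverse by blast
  hence "transpose B ** M = mat 1" by (metis matrix_transpose_mul transpose_mat transpose_transpose)
  hence "x = transpose B *v (M *v x)" by (simp add: matrix_vector_mul_assoc del: transpose_matrix_vector)
  with assms show False by simp
qed

lemma meas_stretch: assumes "q \<in> hyperplane_H"
  shows "meas_apply d r q = stretched_matrix d r *v (q::real^'n)"
proof -
  have sq: "(\<Sum>j\<in>UNIV. q$j) = 1" using assms by (simp add: hyperplane_H_def)
  show ?thesis
  proof (rule vec_eq_iff[THEN iffD2], rule allI)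
    fix i
    have "meas_apply d r q $ i = (real d + 1) * (\<Sum>j\<in>UNIV. q$j * r i j) - (1/real d) * (\<Sum>j\<in>UNIV. r i j)"
      by (simp add: meas_apply_def left_diff_distrib sum_subtractf sum_distrib_left mult.assoc)
    also have "\<dots> = (real d + 1) * (\<Sum>j\<in>UNIV. q$j * r i j) - (1/real d) * (\<Sum>j\<in>UNIV. r i j) * (\<Sum>j\<in>UNIV. q$j)"
      using sq by simp
    also have "\<dots> = (\<Sum>j\<in>UNIV. ((real d + 1) * r i j) * q$j - ((1/real d) * (\<Sum>k\<in>UNIV. r i k)) * q$j)"
    proof -
      have e1: "(1/real d) * (\<Sum>j\<in>UNIV. r i j) * (\<Sum>j\<in>UNIV. q$j) = (\<Sum>j\<in>UNIV. ((1/real d) * (\<Sum>k\<in>UNIV. r i k)) * q$j)"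
        by (rule sum_distrib_left)
      have e2: "(real d + 1) * (\<Sum>j\<in>UNIV. q$j * r i j) = (\<Sum>j\<in>UNIV. ((real d + 1) * r i j) * q$j)"
        by (simp add: sum_distrib_left mult.commute mult.left_commute)
      show ?thesis by (simp only: e1 e2 sum_subtractf)
    qed
    also have "\<dots> = (stretched_matrix d r *v q) $ i"
      by (simp add: stretched_matrix_def matrix_vector_mult_def left_diff_distrib)
    finally show "meas_apply d r q $ i = (stretched_matrix d r *v q) $ i" .
  qed
qed

lemma H_iff: "u \<in> hyperplane_H \<longleftrightarrow> u \<bullet> vec 1 = 1"
  by (simp add: hyperplane_H_def sum_inner_one)

lemma orth_T1: assumes "orthogonal_matrix (R::real^'n^'n)" "R *v vec 1 = vec 1"
  shows "transpose R *v vec 1 = vec 1"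
proof -
  have "transpose R *v (R *v vec 1) = vec 1" using assms(1)
    by (simp add: matrix_vector_mul_assoc orthogonal_matrix_def del: transpose_matrix_vector)
  thus ?thesis using assms(2) by simp
qed

lemma qplex_image:
  assumes orth: "orthogonal_matrix (R::real^'n^'n)" and R1: "R *v vec 1 = vec 1"
    and Q: "qplex d Q" and nn: "\<And>q i. q \<in> Q \<Longrightarrow> (R *v q)$i \<ge> 0"
  shows "qplex d ((\<lambda>q. R *v q) ` Q)"
proof -
  have T1: "transpose R *v vec 1 = vec 1" using orth_T1[OF orth R1] .
  have orthT: "orthogonal_matrix (transpose R)" using orth by (simp add: orthogonal_matrix_def)
  have RH: "R *v u \<in> hyperplane_H \<longleftrightarrow> u \<in> hyperplane_H" for u
    unfolding H_iff inner_mv_transpose T1 ..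
  have RtH: "transpose R *v u \<in> hyperplane_H \<longleftrightarrow> u \<in> hyperplane_H" for u
    unfolding H_iff inner_mv_transpose transpose_transpose R1 ..
  have RRt: "R *v (transpose R *v u) = u" for u using orth
    by (simp add: matrix_vector_mul_assoc orthogonal_matrix_def del: transpose_matrix_vector)
  have RtR: "transpose R *v (R *v u) = u" for u using orth
    by (simp add: matrix_vector_mul_assoc orthogonal_matrix_def del: transpose_matrix_vector)
  have cen: "centre d = (1 / (real d)^2) *\<^sub>R (vec 1 :: real^'n)"
    by (simp add: centre_def vec_eq_iff)
  have Rc: "R *v centre d = (centre d :: real^'n)"
    unfolding cen using R1 by (simp add: matrix_vector_mult_scaleR)
  have Rn: "norm (R *v u - centre d) = norm (u - centre d)" for u
  proof -
    have "R *v u - centre d = R *v (u - centre d)" by (simp add: matrix_vector_mult_diff_distrib Rc)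
    thus ?thesis using orth_norm[OF orth] by simp
  qed
  have QS: "Q \<subseteq> prob_simplex \<inter> out_ball d" and QP: "polar d Q = Q" using Q by (auto simp: qplex_def)
  have QH: "q \<in> hyperplane_H" if "q \<in> Q" for q
    using QS that by (auto simp: prob_simplex_def hyperplane_H_def)
  have sub: "(\<lambda>q. R *v q) ` Q \<subseteq> prob_simplex \<inter> out_ball d"
  proof
    fix x assume "x \<in> (\<lambda>q. R *v q) ` Q"
    then obtain q where q: "q \<in> Q" "x = R *v q" by auto
    have "R *v q \<in> hyperplane_H" using RH QH[OF q(1)] by simp
    moreover have "norm (q - centre d) \<le> out_radius d" using QS q(1) by (auto simp: out_ball_def)
    ultimately show "x \<in> prob_simplex \<inter> out_ball d"
      using q nn[OF q(1)] Rn[of q] by (auto simp: prob_simplex_def out_ball_def hyperplane_H_def)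
  qed
  have pol: "polar d ((\<lambda>q. R *v q) ` Q) = (\<lambda>q. R *v q) ` Q"
  proof -
    have "u \<in> polar d ((\<lambda>q. R *v q) ` Q) \<longleftrightarrow> transpose R *v u \<in> polar d Q" for u
    proof -
      have e: "u \<bullet> (R *v v) = (transpose R *v u) \<bullet> v" for v by (metis inner_commute inner_mv_transpose)
      show ?thesis unfolding polar_def using RtH[of u] e by (simp del: transpose_matrix_vector)
    qed
    also have "\<dots> u \<longleftrightarrow> u \<in> (\<lambda>q. R *v q) ` Q" for u
    proof
      assume "transpose R *v u \<in> polar d Q"
      hence "transpose R *v u \<in> Q" using QP by simp
      thus "u \<in> (\<lambda>q. R *v q) ` Q" using RRt[of u] by force
    next
      assume "u \<in> (\<lambda>q. R *v q) ` Q"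
      then obtain q where "q \<in> Q" "u = R *v q" by auto
      thus "transpose R *v u \<in> polar d Q" using QP RtR by simp
    qed
    finally show ?thesis by blast
  qed
  show ?thesis using sub pol by (simp add: qplex_def)
qed

lemma aux: "(D::real) \<ge> 2 \<Longrightarrow> 1/(D+1) + D^2/(D*(D+1)) = 1"
proof -
  assume "D \<ge> 2"
  hence "D \<noteq> 0" "D + 1 \<noteq> 0" "D*(D+1) \<noteq> 0" by auto
  thus ?thesis by (simp add: divide_simps) (simp add: algebra_simps power2_eq_square)
qed

lemma aux2: "(D::real) \<ge> 2 \<Longrightarrow> (1 + D^2/D)/(D+1) = 1"
proof -
  assume "D \<ge> 2"
  hence "D \<noteq> 0" "D + 1 \<noteq> 0" by auto
  thus ?thesis by (simp add: power2_eq_square)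
qed

lemma sum_delta1: "(\<Sum>i\<in>(UNIV::'n::finite set). ((if i = j then 1 else 0)/c) * f i) = f j / (c::real)"
proof -
  have "(\<Sum>i\<in>(UNIV::'n set). ((if i = j then 1 else 0)/c) * f i) = (\<Sum>i\<in>UNIV. if i = j then f j / c else 0)"
    by (rule sum.cong) auto
  thus ?thesis by simp
qed

lemma sum_delta2: "(\<Sum>i\<in>(UNIV::'n::finite set). f i * ((if i = j then 1 else 0)/c)) = f j / (c::real)"
  using sum_delta1[of j c f] by (simp add: mult.commute)

lemma qplex_H: "qplex d Q \<Longrightarrow> q \<in> Q \<Longrightarrow> q \<in> hyperplane_H"
  by (auto simp: qplex_def prob_simplex_def hyperplane_H_def)

lemma part2:
  fixes Q :: "(real^'n) set" and R :: "real^'n^'n"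
  assumes d: "d \<ge> 2" and card: "CARD('n) = d^2" and Q: "qplex d Q"
    and orth: "orthogonal_matrix R" and RQ: "qplex d ((\<lambda>q. R *v q) ` Q)"
  shows "\<exists>r. type_preserving d Q r \<and> stretched_matrix d r = R"
proof -
  define D where "D = real d"
  have D: "D \<ge> 2" using d by (simp add: D_def)
  have cardD: "real CARD('n) = D^2" using card by (simp add: D_def)
  define w :: "'n \<Rightarrow> real^'n" where "w j = (\<chi> i. (if i = j then 1 else 0)/(D+1) + 1/(D*(D+1)))" for j
  have wsum: "(\<Sum>i\<in>UNIV. w j $ i) = 1" for j
  proof -
    have "(\<Sum>i\<in>UNIV. w j $ i) = (\<Sum>i\<in>UNIV. (if i = j then 1 else 0)/(D+1)) + real CARD('n) * (1/(D*(D+1)))"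
      by (simp add: w_def sum.distrib)
    also have "\<dots> = 1/(D+1) + D^2/(D*(D+1))" by (simp add: cardD sum_divide_distrib[symmetric])
    also have "\<dots> = 1" using aux[OF D] .
    finally show ?thesis .
  qed
  have wQ: "w j \<in> Q" for j
  proof -
    have "w j \<in> polar d Q"
      unfolding polar_def
    proof (intro CollectI conjI ballI)
      show "w j \<in> hyperplane_H" using wsum by (simp add: hyperplane_H_def)
      fix v assume v: "v \<in> Q"
      have vs: "(\<Sum>i\<in>UNIV. v$i) = 1" using qplex_H[OF Q v] by (simp add: hyperplane_H_def)
      have vn: "v$j \<ge> 0" using Q v by (auto simp: qplex_def prob_simplex_def)
      have "w j \<bullet> v = (\<Sum>i\<in>UNIV. ((if i = j then 1 else 0)/(D+1)) * v$i) + (1/(D*(D+1))) * (\<Sum>i\<in>UNIV. v$i)"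
        by (simp add: w_def inner_vec_def distrib_right sum.distrib sum_distrib_left)
      also have "\<dots> = v$j/(D+1) + 1/(D*(D+1))" using vs by (simp only: sum_delta1)
      finally have "w j \<bullet> v = v$j/(D+1) + 1/(D*(D+1))" .
      moreover have "v$j/(D+1) \<ge> 0" using vn D by simp
      ultimately show "1 / (real d * (real d + 1)) \<le> w j \<bullet> v" by (simp add: D_def)
    qed
    thus ?thesis using Q by (simp add: qplex_def)
  qed
  define \<rho> where "\<rho> i = (\<Sum>k\<in>UNIV. R$i$k)" for i
  define \<sigma> where "\<sigma> j = (\<Sum>i\<in>UNIV. R$i$j)" for j
  have Rw: "(R *v w j)$i = R$i$j/(D+1) + \<rho> i/(D*(D+1))" for i j
  proof -
    have "(R *v w j)$i = (\<Sum>k\<in>UNIV. R$i$k * ((if k = j then 1 else 0)/(D+1))) + (\<Sum>k\<in>UNIV. R$i$k) * (1/(D*(D+1)))"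
      by (simp add: w_def matrix_vector_mult_def distrib_left sum.distrib sum_distrib_right sum_divide_distrib)
    also have "\<dots> = R$i$j/(D+1) + \<rho> i/(D*(D+1))" by (simp only: sum_delta2 \<rho>_def) simp
    finally show ?thesis .
  qed
  have RwS: "R *v w j \<in> prob_simplex" for j using RQ wQ[of j] by (auto simp: qplex_def)
  have col: "\<sigma> j/(D+1) + (\<Sum>i\<in>UNIV. \<rho> i)/(D*(D+1)) = 1" for j
  proof -
    have "1 = (\<Sum>i\<in>UNIV. (R *v w j)$i)" using RwS[of j] by (simp add: prob_simplex_def)
    also have "\<dots> = \<sigma> j/(D+1) + (\<Sum>i\<in>UNIV. \<rho> i)/(D*(D+1))"
      by (simp add: Rw sum.distrib \<sigma>_def sum_divide_distrib)
    finally show ?thesis by simp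
  qed
  define \<tau> where "\<tau> = (\<Sum>i\<in>UNIV. \<rho> i)"
  have tau2: "\<tau> = (\<Sum>j\<in>UNIV. \<sigma> j)" unfolding \<tau>_def \<rho>_def \<sigma>_def by (rule sum.swap)
  have "real CARD('n) = (\<Sum>j\<in>(UNIV::'n set). (1::real))" by simp
  also have "\<dots> = (\<Sum>j\<in>UNIV. \<sigma> j/(D+1) + \<tau>/(D*(D+1)))" using col by (simp add: \<tau>_def)
  also have "\<dots> = \<tau>/(D+1) + real CARD('n) * (\<tau>/(D*(D+1)))" by (simp add: sum.distrib sum_divide_distrib[symmetric] tau2)
  finally have "D^2 = \<tau>/(D+1) + D^2 * (\<tau>/(D*(D+1)))" by (simp add: cardD)
  also have "\<tau>/(D+1) + D^2 * (\<tau>/(D*(D+1))) = \<tau> * (1/(D+1) + D^2/(D*(D+1)))" by (simp add: algebra_simps)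
  also have "\<dots> = \<tau>" using aux[OF D] by simp
  finally have tau: "\<tau> = D^2" by simp
  have sig: "\<sigma> j = 1" for j
  proof -
    have "\<sigma> j/(D+1) + D^2/(D*(D+1)) = 1" using col[of j] tau by (simp add: \<tau>_def)
    hence "\<sigma> j/(D+1) = 1/(D+1)" using aux[OF D] by linarith
    thus ?thesis using D by (simp add: divide_simps)
  qed
  have T1: "transpose R *v vec 1 = vec 1"
    by (simp add: vec_eq_iff vector_matrix_mult_def sig[unfolded \<sigma>_def] del: vec_1)
  have orthT: "orthogonal_matrix (transpose R)" using orth by (simp add: orthogonal_matrix_def)
  have R1: "R *v vec 1 = vec 1" using orth_T1[OF orthT] T1 by simp
  have rho: "\<rho> i = 1" for i
  proof -
    have "(R *v vec 1) $ i = 1" using R1 by simp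
    thus ?thesis by (simp add: \<rho>_def matrix_vector_mult_def del: vec_1)
  qed
  define r where "r i j = (R$i$j + 1/D)/(D+1)" for i j
  have rw: "r i j = (R *v w j)$i" for i j
  proof -
    have "D \<noteq> 0" "D + 1 \<noteq> 0" using D by auto
    thus ?thesis by (simp add: Rw rho r_def divide_simps)
  qed
  have meas: "measurement r"
    unfolding measurement_def
  proof (intro conjI allI)
    fix i j show "0 \<le> r i j" using RwS[of j] by (simp add: rw prob_simplex_def)
  next
    fix j
    have "(\<Sum>i\<in>UNIV. r i j) = (\<sigma> j + D^2/D)/(D+1)"
      by (simp add: r_def sum_divide_distrib[symmetric] sum.distrib \<sigma>_def cardD)
    thus "(\<Sum>i\<in>UNIV. r i j) = 1" using aux2[OF D] by (simp add: sig)
  qed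
  have str: "stretched_matrix d r = R"
  proof -
    have "(D + 1) * r i j - (1 / D) * (\<Sum>k\<in>UNIV. r i k) = R$i$j" for i j
    proof -
      have "(\<Sum>k\<in>UNIV. r i k) = (\<rho> i + D^2/D)/(D+1)"
        by (simp add: r_def sum_divide_distrib[symmetric] sum.distrib \<rho>_def cardD)
      hence "(\<Sum>k\<in>UNIV. r i k) = 1" using aux2[OF D] by (simp add: rho)
      moreover have "(D + 1) * r i j = R$i$j + 1/D" using D by (simp add: r_def)
      ultimately show ?thesis by simp
    qed
    thus ?thesis by (simp add: stretched_matrix_def vec_eq_iff D_def)
  qed
  have img: "meas_apply d r ` Q = (\<lambda>q. R *v q) ` Q"
    using meas_stretch[OF qplex_H[OF Q]] str by (auto intro!: image_cong)
  show ?thesis using meas img RQ str by (auto simp: type_preserving_def)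
qed

lemma part1:
  fixes Q :: "(real^'n) set" and s :: "'n \<Rightarrow> real^'n"
  assumes d: "d \<ge> 2" and card: "CARD('n) = d^2" and Q: "qplex d Q"
    and hs: "\<forall>i. s i \<in> Q \<inter> out_sphere d" and reg: "regular_simplex_vertices s"
  shows "type_preserving d Q (\<lambda>i j. s i $ j) \<and>
            stretched_matrix d (\<lambda>i j. s i $ j) = (\<chi> i j. (real d + 1) * s i $ j - 1 / real d)"
proof -
  define D where "D = real d"
  have D: "D \<ge> 2" using d by (simp add: D_def)
  have Dnz: "D \<noteq> 0" "D + 1 \<noteq> 0" "D - 1 \<noteq> 0" using D by auto
  have cardD: "real CARD('n) = D^2" using card by (simp add: D_def)
  define c :: "real^'n" where "c = centre d"
  have cc: "c $ j = 1/D^2" for j by (simp add: c_def centre_def D_def)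
  have c1: "c \<bullet> vec 1 = 1" using Dnz by (simp add: inner_vec_def cc cardD)
  define \<rho> where "\<rho> = (D-1)/(D^2*(D+1))"
  have ro: "(out_radius d)^2 = \<rho>"
  proof -
    have "(D-1)/(D^2*(D+1)) \<ge> 0" using D by simp
    thus ?thesis by (simp add: out_radius_def \<rho>_def D_def)
  qed
  define a where "a i = s i - c" for i
  have sQ: "s i \<in> Q" for i using hs by auto
  have s1: "s i \<bullet> vec 1 = 1" for i using qplex_H[OF Q sQ[of i]] H_iff by blast
  have a1: "a i \<bullet> vec 1 = 0" for i using s1[of i] c1 by (simp add: a_def inner_diff_left)
  have aa: "a i \<bullet> a i = \<rho>" for i
  proof -
    have "norm (a i) = out_radius d" using hs by (auto simp: out_sphere_def a_def c_def)
    thus ?thesis using ro by (metis power2_norm_eq_inner)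
  qed
  obtain \<delta> where del: "\<And>i j. i \<noteq> j \<Longrightarrow> dist (s i) (s j) = \<delta>"
    using reg by (auto simp: regular_simplex_vertices_def)
  define \<gamma> where "\<gamma> = \<rho> - \<delta>^2/2"
  have aij: "a i \<bullet> a j = \<gamma>" if "i \<noteq> j" for i j
  proof -
    have "\<delta>^2 = (a i - a j) \<bullet> (a i - a j)"
    proof -
      have "a i - a j = s i - s j" by (simp add: a_def)
      moreover have "norm (s i - s j) = \<delta>" using del[OF that] by (simp add: dist_norm)
      ultimately show ?thesis by (simp add: power2_norm_eq_inner[symmetric])
    qed
    also have "\<dots> = a i \<bullet> a i - 2 * (a i \<bullet> a j) + a j \<bullet> a j"
      by (simp add: inner_diff_left inner_diff_right inner_commute)
    finally show ?thesis using aa by (simp add: \<gamma>_def field_simps)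
  qed
  have agen: "a i \<bullet> a j = \<gamma> + (if i = j then \<rho> - \<gamma> else 0)" for i j
    using aa aij by (cases "i = j") auto
  have pos: "\<rho> - \<gamma> > 0"
  proof -
    obtain i :: 'n where True by simp
    have "\<exists>j. j \<noteq> i"
    proof (rule ccontr)
      assume "\<not> (\<exists>j. j \<noteq> i)"
      hence U: "(UNIV::'n set) = {i}" by auto
      have "CARD('n) = card {i}" by (simp only: U)
      hence "CARD('n) = 1" by simp
      moreover have "(2::nat)^2 \<le> d^2" using d by (intro power_mono) auto
      ultimately show False using card by simp
    qed
    then obtain j where ji: "j \<noteq> i" by blast
    have "s i \<noteq> s j" using reg ji by (auto simp: regular_simplex_vertices_def inj_def)
    hence "\<delta> > 0" using del[of j i] ji by auto
    thus ?thesis by (simp add: \<gamma>_def)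
  qed
  define M :: "real^'n^'n" where "M = (\<chi> i. a i)"
  have M1: "M *v vec 1 = 0"
    using a1 by (simp add: vec_eq_iff M_def matrix_vector_mult_def inner_vec_def)
  have v1: "vec 1 \<noteq> (0::real^'n)" by (simp add: vec_eq_iff)
  obtain y where y: "y \<noteq> 0" "y v* M = 0" using singular_left[OF M1 v1] by blast
  have Sy: "(\<Sum>i\<in>UNIV. y$i *\<^sub>R a i) = 0"
  proof -
    have "(y v* M) $ j = (\<Sum>i\<in>UNIV. y$i *\<^sub>R a i) $ j" for j
      by (simp add: vector_matrix_mult_def M_def mult.commute)
    thus ?thesis using y(2) by (simp add: vec_eq_iff)
  qed
  define \<Lambda> where "\<Lambda> = (\<Sum>i\<in>UNIV. y$i)"
  have yk: "y$k = - \<gamma> * \<Lambda> / (\<rho> - \<gamma>)" for k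
  proof -
    have "0 = a k \<bullet> (\<Sum>i\<in>UNIV. y$i *\<^sub>R a i)" using Sy by simp
    also have "\<dots> = (\<Sum>i\<in>UNIV. y$i * (\<gamma> + (if k = i then \<rho> - \<gamma> else 0)))"
      by (simp add: inner_sum_right agen)
    also have "\<dots> = \<gamma> * \<Lambda> + y$k * (\<rho> - \<gamma>)"
    proof -
      have "(\<Sum>i\<in>UNIV. y$i * (\<gamma> + (if k = i then \<rho> - \<gamma> else 0))) = (\<Sum>i\<in>UNIV. \<gamma> * y$i + (if k = i then y$k * (\<rho> - \<gamma>) else 0))"
        by (rule sum.cong) (auto simp: algebra_simps)
      also have "\<dots> = \<gamma> * \<Lambda> + y$k * (\<rho> - \<gamma>)"
        by (simp only: sum.distrib sum_distrib_left[symmetric] \<Lambda>_def) simp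
      finally show ?thesis .
    qed
    finally show ?thesis using pos by (simp add: field_simps)
  qed
  define \<mu> where "\<mu> = - \<gamma> * \<Lambda> / (\<rho> - \<gamma>)"
  have mu: "\<mu> \<noteq> 0"
  proof
    assume "\<mu> = 0"
    hence "y = 0" using yk by (simp add: vec_eq_iff \<mu>_def)
    thus False using y(1) by simp
  qed
  have Sa: "(\<Sum>i\<in>UNIV. a i) = 0"
  proof -
    have "\<mu> *\<^sub>R (\<Sum>i\<in>UNIV. a i) = 0" using Sy yk by (simp add: scaleR_sum_right \<mu>_def)
    thus ?thesis using mu by simp
  qed
  have "0 = (\<Sum>i\<in>UNIV. a i) \<bullet> (\<Sum>j\<in>UNIV. a j)" using Sa by simp
  also have "\<dots> = (\<Sum>i\<in>(UNIV::'n set). (\<Sum>j\<in>(UNIV::'n set). \<gamma> + (if j = i then \<rho> - \<gamma> else 0)))"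
    by (simp add: inner_sum_left inner_sum_right agen)
  also have "\<dots> = D^2 * (D^2 * \<gamma> + (\<rho> - \<gamma>))"
    by (simp add: sum.distrib cardD)
  finally have gam0: "D^2 * \<gamma> + (\<rho> - \<gamma>) = 0" using Dnz by simp
  have key1: "(D+1)^2 * \<rho> + 1/D^2 = 1"
    using Dnz by (simp add: \<rho>_def divide_simps) (simp add: algebra_simps power2_eq_square)
  have key2: "(D+1)^2 * \<gamma> + 1/D^2 = 0"
  proof -
    have "\<gamma> * (D^2 - 1) = - \<rho>" using gam0 by (simp add: algebra_simps)
    hence g: "\<gamma> * ((D-1)*(D+1)) = - \<rho>" by (simp add: power2_eq_square algebra_simps)
    have nz: "(D-1)*(D+1) \<noteq> 0" using Dnz by simp
    have "\<gamma> = (- \<rho>) / ((D-1)*(D+1))" using g nz by (metis nonzero_mult_div_cancel_right)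
    thus ?thesis using Dnz by (simp add: \<rho>_def divide_simps) (simp add: algebra_simps power2_eq_square)
  qed
  define Rm :: "real^'n^'n" where "Rm = (\<chi> i j. (real d + 1) * s i $ j - 1 / real d)"
  have row: "Rm $ i = (D+1) *\<^sub>R a i + (1/D^2) *\<^sub>R vec 1" for i
  proof -
    have "(D+1) * (a i $ j + 1/D^2) - 1/D = (D+1) * a i $ j + 1/D^2" for j
      using Dnz by (simp add: divide_simps) (simp add: algebra_simps power2_eq_square)
    thus ?thesis by (simp add: vec_eq_iff Rm_def a_def cc D_def)
  qed
  have rowinner: "Rm $ i \<bullet> Rm $ j = (D+1)^2 * (a i \<bullet> a j) + 1/D^2" for i j
  proof -
    have a1': "a k \<bullet> (1::real^'n) = 0" "(1::real^'n) \<bullet> a k = 0" for k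
      using a1[of k] by (simp_all add: inner_commute)
    have "Rm $ i \<bullet> Rm $ j = (D+1)^2 * (a i \<bullet> a j) + (1/D^2)^2 * (vec 1 \<bullet> (vec 1::real^'n))"
      unfolding row by (simp add: inner_add_left inner_add_right a1' power2_eq_square)
    also have "vec 1 \<bullet> (vec 1::real^'n) = D^2" by (simp add: inner_vec_def cardD)
    finally show ?thesis using Dnz by (simp add: power2_eq_square)
  qed
  have RRt: "Rm ** transpose Rm = mat 1"
  proof -
    have "(Rm ** transpose Rm) $ i $ j = Rm $ i \<bullet> Rm $ j" for i j
      by (simp add: matrix_matrix_mult_def transpose_def inner_vec_def)
    hence "(Rm ** transpose Rm) $ i $ j = (if i = j then 1 else 0)" for i j
      using rowinner agen key1 key2 by (simp add: algebra_simps)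
    thus ?thesis by (simp add: vec_eq_iff mat_def)
  qed
  have orth: "orthogonal_matrix Rm"
    using RRt matrix_left_right_inverse by (auto simp: orthogonal_matrix_def)
  have R1: "Rm *v vec 1 = vec 1"
  proof -
    have "(Rm *v vec 1) $ i = Rm $ i \<bullet> vec 1" for i
      by (simp add: matrix_vector_mult_def inner_vec_def)
    also have "Rm $ i \<bullet> vec 1 = 1" for i
    proof -
      have "Rm $ i \<bullet> vec 1 = (D+1) * (a i \<bullet> vec 1) + (1/D^2) * (vec 1 \<bullet> (vec 1::real^'n))"
        unfolding row by (simp add: inner_add_left)
      also have "vec 1 \<bullet> (vec 1::real^'n) = D^2" by (simp add: inner_vec_def cardD)
      finally show ?thesis using a1 Dnz by simp
    qed
    finally show ?thesis by (simp add: vec_eq_iff)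
  qed
  have str: "stretched_matrix d (\<lambda>i j. s i $ j) = Rm"
    using s1 by (simp add: stretched_matrix_def Rm_def inner_vec_def)
  have meas: "measurement (\<lambda>i j. s i $ j)"
    unfolding measurement_def
  proof (intro conjI allI)
    fix i j show "0 \<le> s i $ j" using Q sQ[of i] by (auto simp: qplex_def prob_simplex_def)
  next
    fix j
    have "(\<Sum>i\<in>UNIV. s i $ j) = (\<Sum>i\<in>UNIV. a i $ j + 1/D^2)"
      by (simp add: a_def cc)
    also have "\<dots> = (\<Sum>i\<in>UNIV. a i) $ j + D^2 * (1/D^2)" by (simp add: sum.distrib cardD)
    finally show "(\<Sum>i\<in>UNIV. s i $ j) = 1" using Sa Dnz by simp
  qed
  have nn: "(Rm *v q) $ i \<ge> 0" if q: "q \<in> Q" for q i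
  proof -
    have qs: "(\<Sum>j\<in>UNIV. q$j) = 1" using qplex_H[OF Q q] by (simp add: hyperplane_H_def)
    have "q \<in> polar d Q" using Q q by (simp add: qplex_def)
    hence ge: "q \<bullet> s i \<ge> 1/(D*(D+1))" using sQ[of i] by (auto simp: polar_def D_def)
    have "(Rm *v q) $ i = (\<Sum>j\<in>UNIV. (D+1) * (q$j * s i $ j) - (1/D) * q$j)"
      by (simp add: Rm_def matrix_vector_mult_def D_def algebra_simps)
    also have "\<dots> = (D+1) * (q \<bullet> s i) - (1/D) * (\<Sum>j\<in>UNIV. q$j)"
      by (simp only: sum_subtractf sum_distrib_left[symmetric] inner_vec_def inner_real_def)
    also have "\<dots> = (D+1) * (q \<bullet> s i) - 1/D" using qs by simp
    finally have e: "(Rm *v q) $ i = (D+1) * (q \<bullet> s i) - 1/D" .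
    have "(D+1) * (1/(D*(D+1))) = 1/D" using Dnz by simp
    moreover have "(D+1) * (q \<bullet> s i) \<ge> (D+1) * (1/(D*(D+1)))" using ge D by (intro mult_left_mono) auto
    ultimately show ?thesis using e by simp
  qed
  have img: "meas_apply d (\<lambda>i j. s i $ j) ` Q = (\<lambda>q. Rm *v q) ` Q"
    using meas_stretch[OF qplex_H[OF Q]] str by (auto intro!: image_cong)
  have "qplex d ((\<lambda>q. Rm *v q) ` Q)" using qplex_image[OF orth R1 Q nn] by blast
  thus ?thesis using meas img str by (simp add: type_preserving_def Rm_def)
qed

theorem mainTheorem11:
  fixes d :: nat and Q :: "(real^'n) set"
  assumes "d \<ge> 2" and "CARD('n) = d^2" and "qplex d Q"
  shows "(\<forall>s :: 'n \<Rightarrow> real^'n.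
            (\<forall>i. s i \<in> Q \<inter> out_sphere d) \<and> regular_simplex_vertices s \<longrightarrow>
            type_preserving d Q (\<lambda>i j. s i $ j) \<and>
            stretched_matrix d (\<lambda>i j. s i $ j) = (\<chi> i j. (real d + 1) * s i $ j - 1 / real d))
       \<and> (\<forall>R :: real^'n^'n. orthogonal_matrix R \<and> qplex d ((\<lambda>q. R *v q) ` Q) \<longrightarrow>
            (\<exists>r. type_preserving d Q r \<and> stretched_matrix d r = R))"
  using part1[OF assms] part2[OF assms] by blast

end
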